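(* Every two-player continuous time single controller additive reward (SC-AR) stochastic game possesses a stationary deterministic Blackwell-Nash equilibrium; that is, there exist stationary deterministic strategies $f^*,g^*$ and $\alpha_0>0$ such that $(f^*,g^* )$ is an $\alpha$-discounted Nash equilibrium for every $\alpha\in(0,\alpha_0]$.
   Context: A two-player continuous time stochastic game consists of a finite state set $S$, finite nonempty action sets $A^1(s),A^2(s)$, reward rates $r^i(s,a^1,a^2)$ ($i=1,2$), and transition rates $\mu(s',s,a^1,a^2)\ge0$ from $s$ to $s'\ne s$, with $\mu(s,s,a^1,a^2)=-\sum_{s'\ne s}\mu(s',s,a^1,a^2)$. Stationary strategies $f,g$ assign to each state a probability distribution on $A^1(s)$, resp. $A^2(s)$; they are deterministic if each such distribution is concentrated on one action. For a stationary pair, $r^i(s,f,g)=\sum_{a^1,a^2}f(s,a^1)g(s,a^2)r^i(s,a^1,a^2)$ and $Q(f,g)$ is the generator matrix with $Q(f,g)_{ss'}=\sum_{a^1,a^2}f(s,a^1)g(s,a^2)\mu(s',s,a^1,a^2)$. For $\alpha>0$ the $\alpha$-discounted payoff is $v^i_\alpha(f,g)=(\alpha I-Q(f,g))^{-1}r^i(f,g)$ (equivalently $E^s_{f,g}\int_0^\infty e^{-\alpha t}r^i(s_t,f,g)dt$). A stationary pair $(f^*,g^* )$ is an $\alpha$-discounted Nash equilibrium if for all $s$, $v^1_\alpha(s,f^*,g^* )\ge v^1_\alpha(s,f,g^* )$ for all stationary $f$ and $v^2_\alpha(s,f^*,g^* )\ge v^2_\alpha(s,f^*,g)$ for all stationary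 $g$. The game is SC-AR if (a) $\mu(s',s,a^1,a^2)=\mu(s',s,a^2)$ does not depend on $a^1$, and (b) $r^1(s,a^1,a^2)=r^1_1(s,a^1)+r^1_2(s,a^2)$ for some functions $r^1_1,r^1_2$, for all $s,a^1,a^2$. *)

theory Defs
  imports "HOL-Analysis.Analysis"
begin

text \<open>A two-player continuous time stochastic game on the finite state type 's.
  A1 s, A2 s: action sets; r i s a1 a2: reward rates; mu s' s a1 a2: transition rate
  from s to s'.\<close>

definition valid_game ::
  "('s::finite \<Rightarrow> 'a1 set) \<Rightarrow> ('s \<Rightarrow> 'a2 set) \<Rightarrow> ('s \<Rightarrow> 's \<Rightarrow> 'a1 \<Rightarrow> 'a2 \<Rightarrow> real) \<Rightarrow> bool" where
  "valid_game A1 A2 mu \<longleftrightarrow>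
     (\<forall>s. finite (A1 s) \<and> A1 s \<noteq> {} \<and> finite (A2 s) \<and> A2 s \<noteq> {}) \<and>
     (\<forall>s s' a1 a2. a1 \<in> A1 s \<longrightarrow> a2 \<in> A2 s \<longrightarrow> s' \<noteq> s \<longrightarrow> mu s' s a1 a2 \<ge> 0) \<and>
     (\<forall>s a1 a2. a1 \<in> A1 s \<longrightarrow> a2 \<in> A2 s \<longrightarrow>
        mu s s a1 a2 = - (\<Sum>s'\<in>UNIV - {s}. mu s' s a1 a2))"

definition SC_AR ::
  "('s::finite \<Rightarrow> 'a1 set) \<Rightarrow> ('s \<Rightarrow> 'a2 set) \<Rightarrow> ('s \<Rightarrow> 'a1 \<Rightarrow> 'a2 \<Rightarrow> real)
   \<Rightarrow> ('s \<Rightarrow> 's \<Rightarrow> 'a1 \<Rightarrow> 'a2 \<Rightarrow> real) \<Rightarrow> bool" where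
  "SC_AR A1 A2 r1 mu \<longleftrightarrow>
     (\<exists>mu2 :: 's \<Rightarrow> 's \<Rightarrow> 'a2 \<Rightarrow> real. \<forall>s s' a1 a2. a1 \<in> A1 s \<longrightarrow> a2 \<in> A2 s \<longrightarrow>
        mu s' s a1 a2 = mu2 s' s a2) \<and>
     (\<exists>(r11 :: 's \<Rightarrow> 'a1 \<Rightarrow> real) (r12 :: 's \<Rightarrow> 'a2 \<Rightarrow> real).
        \<forall>s a1 a2. a1 \<in> A1 s \<longrightarrow> a2 \<in> A2 s \<longrightarrow> r1 s a1 a2 = r11 s a1 + r12 s a2)"

definition stationary :: "('s \<Rightarrow> 'a set) \<Rightarrow> ('s \<Rightarrow> 'a \<Rightarrow> real) \<Rightarrow> bool" where
  "stationary A f \<longleftrightarrow> (\<forall>s. (\<forall>a\<in>A s. f s a \<ge> 0) \<and> (\<Sum>a\<in>A s. f s a) = 1)"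

definition deterministic :: "('s \<Rightarrow> 'a set) \<Rightarrow> ('s \<Rightarrow> 'a \<Rightarrow> real) \<Rightarrow> bool" where
  "deterministic A f \<longleftrightarrow> stationary A f \<and>
     (\<forall>s. \<exists>b\<in>A s. \<forall>a\<in>A s. f s a = (if a = b then 1 else 0))"

definition rew_vec ::
  "('s::finite \<Rightarrow> 'a1 set) \<Rightarrow> ('s \<Rightarrow> 'a2 set) \<Rightarrow> ('s \<Rightarrow> 'a1 \<Rightarrow> 'a2 \<Rightarrow> real)
   \<Rightarrow> ('s \<Rightarrow> 'a1 \<Rightarrow> real) \<Rightarrow> ('s \<Rightarrow> 'a2 \<Rightarrow> real) \<Rightarrow> real ^ 's" where
  "rew_vec A1 A2 r f g = (\<chi> s. \<Sum>a1\<in>A1 s. \<Sum>a2\<in>A2 s. f s a1 * g s a2 * r s a1 a2)"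

definition gen_mat ::
  "('s::finite \<Rightarrow> 'a1 set) \<Rightarrow> ('s \<Rightarrow> 'a2 set) \<Rightarrow> ('s \<Rightarrow> 's \<Rightarrow> 'a1 \<Rightarrow> 'a2 \<Rightarrow> real)
   \<Rightarrow> ('s \<Rightarrow> 'a1 \<Rightarrow> real) \<Rightarrow> ('s \<Rightarrow> 'a2 \<Rightarrow> real) \<Rightarrow> real ^ 's ^ 's" where
  "gen_mat A1 A2 mu f g = (\<chi> s s'. \<Sum>a1\<in>A1 s. \<Sum>a2\<in>A2 s. f s a1 * g s a2 * mu s' s a1 a2)"

definition disc_payoff ::
  "('s::finite \<Rightarrow> 'a1 set) \<Rightarrow> ('s \<Rightarrow> 'a2 set) \<Rightarrow> ('s \<Rightarrow> 's \<Rightarrow> 'a1 \<Rightarrow> 'a2 \<Rightarrow> real)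
   \<Rightarrow> ('s \<Rightarrow> 'a1 \<Rightarrow> 'a2 \<Rightarrow> real) \<Rightarrow> real
   \<Rightarrow> ('s \<Rightarrow> 'a1 \<Rightarrow> real) \<Rightarrow> ('s \<Rightarrow> 'a2 \<Rightarrow> real) \<Rightarrow> real ^ 's" where
  "disc_payoff A1 A2 mu r \<alpha> f g =
     matrix_inv (mat \<alpha> - gen_mat A1 A2 mu f g) *v rew_vec A1 A2 r f g"

definition disc_nash ::
  "('s::finite \<Rightarrow> 'a1 set) \<Rightarrow> ('s \<Rightarrow> 'a2 set) \<Rightarrow> ('s \<Rightarrow> 's \<Rightarrow> 'a1 \<Rightarrow> 'a2 \<Rightarrow> real)
   \<Rightarrow> ('s \<Rightarrow> 'a1 \<Rightarrow> 'a2 \<Rightarrow> real) \<Rightarrow> ('s \<Rightarrow> 'a1 \<Rightarrow> 'a2 \<Rightarrow> real) \<Rightarrow> real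
   \<Rightarrow> ('s \<Rightarrow> 'a1 \<Rightarrow> real) \<Rightarrow> ('s \<Rightarrow> 'a2 \<Rightarrow> real) \<Rightarrow> bool" where
  "disc_nash A1 A2 mu r1 r2 \<alpha> f g \<longleftrightarrow>
     stationary A1 f \<and> stationary A2 g \<and>
     (\<forall>f'. stationary A1 f' \<longrightarrow> (\<forall>s.
        disc_payoff A1 A2 mu r1 \<alpha> f g $ s \<ge> disc_payoff A1 A2 mu r1 \<alpha> f' g $ s)) \<and>
     (\<forall>g'. stationary A2 g' \<longrightarrow> (\<forall>s.
        disc_payoff A1 A2 mu r2 \<alpha> f g $ s \<ge> disc_payoff A1 A2 mu r2 \<alpha> f g' $ s))"

end

theory Submission
  imports Defs "HOL-Computational_Algebra.Polynomial"
begin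


definition gen :: "real^'s::finite^'s \<Rightarrow> bool" where
  "gen Q \<longleftrightarrow> (\<forall>s s'. s' \<noteq> s \<longrightarrow> Q$s$s' \<ge> 0) \<and> (\<forall>s. (\<Sum>s'\<in>UNIV. Q$s$s') = 0)"

lemma mv_mat_minus:
  fixes Q :: "real^'s::finite^'s"
  shows "((mat \<alpha> - Q) *v v)$s = \<alpha> * v$s - (\<Sum>t\<in>UNIV. Q$s$t * v$t)"
proof -
  have "((mat \<alpha> - Q) *v v)$s = (\<Sum>t\<in>UNIV. (if s = t then \<alpha> else 0) * v$t - Q$s$t * v$t)"
    by (simp add: matrix_vector_mult_def mat_def left_diff_distrib)
  also have "\<dots> = (\<Sum>t\<in>UNIV. (if s = t then \<alpha> else 0) * v$t) - (\<Sum>t\<in>UNIV. Q$s$t * v$t)"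
    by (simp add: sum_subtractf)
  also have "(\<Sum>t\<in>UNIV. (if s = t then \<alpha> else 0) * v$t) = (\<Sum>t\<in>UNIV. (if s = t then \<alpha> * v$t else 0))"
    by (rule sum.cong) auto
  also have "\<dots> = \<alpha> * v$s" by simp
  finally show ?thesis .
qed

lemma gen_sum_nonneg:
  fixes Q :: "real^'s::finite^'s"
  assumes "gen Q" "\<forall>t. v$m \<le> v$t"
  shows "(\<Sum>t\<in>UNIV. Q$m$t * v$t) \<ge> 0"
proof -
  have e1: "(\<Sum>t\<in>UNIV. Q$m$t * (v$t - v$m)) = (\<Sum>t\<in>UNIV. Q$m$t * v$t) - (\<Sum>t\<in>UNIV. Q$m$t * v$m)"
    by (simp add: right_diff_distrib sum_subtractf)
  have e2: "(\<Sum>t\<in>UNIV. Q$m$t * v$m) = (\<Sum>t\<in>UNIV. Q$m$t) * v$m" by (rule sum_distrib_right[symmetric])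
  have "(\<Sum>t\<in>UNIV. Q$m$t * v$t) = (\<Sum>t\<in>UNIV. Q$m$t * (v$t - v$m)) + v$m * (\<Sum>t\<in>UNIV. Q$m$t)"
    using e1 e2 by simp
  also have "\<dots> = (\<Sum>t\<in>UNIV. Q$m$t * (v$t - v$m))" using assms(1) by (simp add: gen_def)
  also have "\<dots> \<ge> 0"
  proof (rule sum_nonneg)
    fix t assume "t \<in> (UNIV::'s set)"
    show "Q$m$t * (v$t - v$m) \<ge> 0"
    proof (cases "t = m")
      case False
      then show ?thesis using assms by (simp add: gen_def)
    qed simp
  qed
  finally show ?thesis .
qed

lemma ex_min_vec:
  fixes v :: "real^'s::finite"
  shows "\<exists>m. \<forall>t. v$m \<le> v$t"
proof -
  have "Min (range (\<lambda>t. v$t)) \<in> range (\<lambda>t. v$t)" by (rule Min_in) auto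
  then obtain m where eq: "Min (range (\<lambda>t. v$t)) = v$m" by (rule rangeE)
  show ?thesis
  proof (intro exI allI)
    fix t show "v$m \<le> v$t" unfolding eq[symmetric] by (rule Min_le) auto
  qed
qed

lemma maxprinc:
  fixes Q :: "real^'s::finite^'s"
  assumes "gen Q" "\<alpha> > 0" "\<forall>s. ((mat \<alpha> - Q) *v v)$s \<ge> 0"
  shows "v$s \<ge> 0"
proof -
  obtain m where m: "\<forall>t. v$m \<le> v$t" using ex_min_vec by blast
  have "\<alpha> * v$m - (\<Sum>t\<in>UNIV. Q$m$t * v$t) \<ge> 0" using assms(3)[rule_format, of m] by (simp only: mv_mat_minus)
  moreover have "(\<Sum>t\<in>UNIV. Q$m$t * v$t) \<ge> 0" using gen_sum_nonneg[OF assms(1) m] .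
  ultimately have "\<alpha> * v$m \<ge> 0" by linarith
  then have "v$m \<ge> 0" using assms(2) by (simp add: zero_le_mult_iff)
  then show ?thesis using m by (meson order_trans)
qed

lemma strict_pos:
  fixes Q :: "real^'s::finite^'s"
  assumes "gen Q" "\<alpha> > 0" "\<forall>s. ((mat \<alpha> - Q) *v v)$s \<ge> 0" "((mat \<alpha> - Q) *v v)$s > 0"
  shows "v$s > 0"
proof (rule ccontr)
  assume "\<not> v$s > 0"
  moreover have nn: "\<forall>t. v$t \<ge> 0" using maxprinc[OF assms(1-3)] by blast
  ultimately have vs: "v$s = 0" using nn[rule_format, of s] by linarith
  have "(\<Sum>t\<in>UNIV. Q$s$t * v$t) \<ge> 0"
  proof (rule sum_nonneg)
    fix t assume "t \<in> (UNIV::'s set)"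
    show "Q$s$t * v$t \<ge> 0"
    proof (cases "t = s")
      case False
      then show ?thesis using assms(1) nn by (simp add: gen_def)
    qed (simp add: vs)
  qed
  moreover have "\<alpha> * v$s - (\<Sum>t\<in>UNIV. Q$s$t * v$t) > 0" using assms(4) by (simp only: mv_mat_minus)
  ultimately show False using vs by simp
qed

lemma gen_invertible:
  fixes Q :: "real^'s::finite^'s"
  assumes "gen Q" "\<alpha> > 0"
  shows "invertible (mat \<alpha> - Q)"
proof -
  let ?M = "mat \<alpha> - Q"
  have "inj ((*v) ?M)"
  proof (rule injI)
    fix x y assume "?M *v x = ?M *v y"
    then have z: "?M *v (x - y) = 0" by (simp add: matrix_vector_mult_diff_distrib)
    have "?M *v (y - x) = 0" using \<open>?M *v x = ?M *v y\<close> by (simp add: matrix_vector_mult_diff_distrib)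
    have "\<forall>s. (x - y)$s \<ge> 0" using maxprinc[OF assms, of "x - y"] z by simp
    moreover have "\<forall>s. (y - x)$s \<ge> 0" using maxprinc[OF assms, of "y - x"] \<open>?M *v (y - x) = 0\<close> by simp
    ultimately show "x = y"
    proof (intro iffD2[OF vec_eq_iff] allI)
      fix s assume "\<forall>s. (x - y)$s \<ge> 0" "\<forall>s. (y - x)$s \<ge> 0"
      then have "x$s - y$s \<ge> 0" "y$s - x$s \<ge> 0" by auto
      then show "x$s = y$s" by linarith
    qed
  qed
  then have "det (matrix ((*v) ?M)) \<noteq> 0"
    using det_nz_iff_inj_gen[OF matrix_vector_mul_linear_gen] by blast
  then show ?thesis by (simp add: invertible_det_nz matrix_of_matrix_vector_mul)
qed

lemma matrix_inv_solves:
  fixes M :: "real^'s::finite^'s"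
  assumes "invertible M"
  shows "M *v (matrix_inv M *v r) = r"
proof -
  have "M ** matrix_inv M = mat 1 \<and> matrix_inv M ** M = mat 1"
    using assms unfolding invertible_def matrix_inv_def by (rule someI_ex)
  then show ?thesis by (simp add: matrix_vector_mul_assoc)
qed



lemma poly_det:
  fixes P :: "real poly^'n::finite^'n"
  shows "poly (det P) x = det (\<chi> i j. poly (P$i$j) x)"
  unfolding det_def by (simp add: poly_sum poly_prod)

lemma rational_inv:
  fixes Q :: "real^'s::finite^'s" and r :: "real^'s"
  shows "\<exists>N D. \<forall>\<alpha>. poly D \<alpha> = det (mat \<alpha> - Q) \<and>
     (det (mat \<alpha> - Q) \<noteq> 0 \<longrightarrow> (matrix_inv (mat \<alpha> - Q) *v r)$k = poly N \<alpha> / poly D \<alpha>)"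
proof -
  define PM :: "real poly^'s^'s" where "PM = (\<chi> i j. (if i = j then [:0,1:] else 0) - [:Q$i$j:])"
  define D where "D = det PM"
  define N where "N = det (\<chi> i j. if j = k then [:r$i:] else PM$i$j)"
  have ev: "(\<chi> i j. poly (PM$i$j) \<alpha>) = mat \<alpha> - Q" for \<alpha>
    by (simp add: PM_def vec_eq_iff mat_def)
  have D: "poly D \<alpha> = det (mat \<alpha> - Q)" for \<alpha>
    unfolding D_def poly_det ev ..
  have N: "poly N \<alpha> = det (\<chi> i j. if j = k then r$i else (mat \<alpha> - Q)$i$j)" for \<alpha>
    unfolding N_def poly_det by (rule arg_cong[where f=det]) (simp add: vec_eq_iff PM_def mat_def)
  show ?thesis
  proof (intro exI allI conjI impI)
    fix \<alpha>
    show "poly D \<alpha> = det (mat \<alpha> - Q)" by (rule D)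
    assume nz: "det (mat \<alpha> - Q) \<noteq> 0"
    then have "invertible (mat \<alpha> - Q)" by (simp add: invertible_det_nz)
    then have "(mat \<alpha> - Q) *v (matrix_inv (mat \<alpha> - Q) *v r) = r" by (rule matrix_inv_solves)
    then have "matrix_inv (mat \<alpha> - Q) *v r =
        (\<chi> k. det(\<chi> i j. if j=k then r$i else (mat \<alpha> - Q)$i$j) / det (mat \<alpha> - Q))"
      using cramer[OF nz] by blast
    then show "(matrix_inv (mat \<alpha> - Q) *v r)$k = poly N \<alpha> / poly D \<alpha>" by (simp add: N D)
  qed
qed

lemma no_sign_change:
  fixes H :: "real \<Rightarrow> real"
  assumes "a \<le> b" "continuous_on {a..b} H" "\<forall>x\<in>{a..b}. H x \<noteq> 0"
  shows "H a \<ge> 0 \<longleftrightarrow> H b \<ge> 0"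
proof
  assume "H a \<ge> 0"
  show "H b \<ge> 0"
  proof (rule ccontr)
    assume "\<not> H b \<ge> 0"
    then obtain x where "a \<le> x" "x \<le> b" "H x = 0"
      using IVT2'[of H b 0 a, OF _ \<open>H a \<ge> 0\<close> assms(1,2)] by auto
    then show False using assms(3) by auto
  qed
next
  assume "H b \<ge> 0"
  show "H a \<ge> 0"
  proof (rule ccontr)
    assume "\<not> H a \<ge> 0"
    then obtain x where "a \<le> x" "x \<le> b" "H x = 0"
      using IVT'[of H a 0 b, OF _ \<open>H b \<ge> 0\<close> assms(1,2)] by auto
    then show False using assms(3) by auto
  qed
qed

lemma sign_const:
  fixes N D N' D' :: "real poly"
  assumes "\<forall>\<alpha>>0. poly D \<alpha> \<noteq> 0 \<and> poly D' \<alpha> \<noteq> 0"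
  defines "H \<equiv> \<lambda>\<alpha>. poly N \<alpha> / poly D \<alpha> - poly N' \<alpha> / poly D' \<alpha>"
  shows "\<exists>\<epsilon>>0. \<forall>\<alpha> \<beta>. 0 < \<alpha> \<longrightarrow> \<alpha> < \<epsilon> \<longrightarrow> 0 < \<beta> \<longrightarrow> \<beta> < \<epsilon> \<longrightarrow> (H \<alpha> \<ge> 0 \<longleftrightarrow> H \<beta> \<ge> 0)"
proof -
  define p where "p = N * D' - N' * D"
  have Hp: "H \<alpha> = poly p \<alpha> / (poly D \<alpha> * poly D' \<alpha>)" if "\<alpha> > 0" for \<alpha>
    using assms(1) that by (simp add: H_def p_def field_simps)
  show ?thesis
  proof (cases "p = 0")
    case True
    then show ?thesis by (intro exI[of _ 1]) (simp add: Hp)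
  next
    case False
    define R where "R = {x. poly p x = 0 \<and> x > 0}"
    have fR: "finite R" unfolding R_def using poly_roots_finite[OF False] by simp
    define \<epsilon> where "\<epsilon> = Min (insert 1 R)"
    have epos: "\<epsilon> > 0" unfolding \<epsilon>_def using fR by (auto simp: R_def)
    have nz: "H x \<noteq> 0" if "0 < x" "x < \<epsilon>" for x
    proof -
      have "x \<notin> R" using that fR unfolding \<epsilon>_def by (meson Min_le finite_insert insertCI not_le)
      then have "poly p x \<noteq> 0" using that by (simp add: R_def)
      then show ?thesis using Hp[OF that(1)] assms(1) that(1) by simp
    qed
    have cont: "continuous_on {a..b} H" if "0 < a" for a b
      unfolding H_def using assms(1) that
      by (intro continuous_intros) auto
    show ?thesis
    proof (intro exI[of _ \<epsilon>] conjI allI impI epos)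
      fix \<alpha> \<beta> :: real assume a: "0 < \<alpha>" "\<alpha> < \<epsilon>" "0 < \<beta>" "\<beta> < \<epsilon>"
      have gen: "H a \<ge> 0 \<longleftrightarrow> H b \<ge> 0" if "0 < a" "a \<le> b" "b < \<epsilon>" for a b
        using no_sign_change[OF that(2) cont[OF that(1)]] nz that by auto
      show "H \<alpha> \<ge> 0 \<longleftrightarrow> H \<beta> \<ge> 0"
      proof (cases "\<alpha> \<le> \<beta>")
        case True then show ?thesis using gen a by blast
      next
        case False then show ?thesis using gen[of \<beta> \<alpha>] a by auto
      qed
    qed
  qed
qed



definition mdp :: "('s::finite \<Rightarrow> 'a set) \<Rightarrow> ('s \<Rightarrow> 's \<Rightarrow> 'a \<Rightarrow> real) \<Rightarrow> bool" where
  "mdp A P \<longleftrightarrow> (\<forall>s. finite (A s) \<and> A s \<noteq> {}) \<and>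
     (\<forall>s s' a. a \<in> A s \<longrightarrow> s' \<noteq> s \<longrightarrow> P s s' a \<ge> 0) \<and>
     (\<forall>s a. a \<in> A s \<longrightarrow> (\<Sum>s'\<in>UNIV. P s s' a) = 0)"

definition Qg :: "('s::finite \<Rightarrow> 'a set) \<Rightarrow> ('s \<Rightarrow> 's \<Rightarrow> 'a \<Rightarrow> real) \<Rightarrow> ('s \<Rightarrow> 'a \<Rightarrow> real) \<Rightarrow> real^'s^'s" where
  "Qg A P g = (\<chi> s s'. \<Sum>a\<in>A s. g s a * P s s' a)"

definition Rg :: "('s::finite \<Rightarrow> 'a set) \<Rightarrow> ('s \<Rightarrow> 'a \<Rightarrow> real) \<Rightarrow> ('s \<Rightarrow> 'a \<Rightarrow> real) \<Rightarrow> real^'s" where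
  "Rg A R g = (\<chi> s. \<Sum>a\<in>A s. g s a * R s a)"

definition val where
  "val A P R \<alpha> g = matrix_inv (mat \<alpha> - Qg A P g) *v Rg A R g"

definition ind :: "('s \<Rightarrow> 'a) \<Rightarrow> 's \<Rightarrow> 'a \<Rightarrow> real" where
  "ind d = (\<lambda>s a. if a = d s then 1 else 0)"

definition adv :: "('s::finite \<Rightarrow> 's \<Rightarrow> 'a \<Rightarrow> real) \<Rightarrow> ('s \<Rightarrow> 'a \<Rightarrow> real) \<Rightarrow> real \<Rightarrow> real^'s \<Rightarrow> 's \<Rightarrow> 'a \<Rightarrow> real" where
  "adv P R \<alpha> v s a = R s a + (\<Sum>t\<in>UNIV. P s t a * v$t) - \<alpha> * v$s"

lemma gen_Qg:
  fixes A :: "'s::finite \<Rightarrow> 'a set"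
  assumes "mdp A P" "stationary A g"
  shows "gen (Qg A P g)"
  unfolding gen_def
proof (intro conjI allI impI)
  fix s s' :: 's assume "s' \<noteq> s"
  then show "Qg A P g $ s $ s' \<ge> 0" using assms unfolding Qg_def mdp_def stationary_def
    by (auto intro!: sum_nonneg mult_nonneg_nonneg)
next
  fix s
  have "(\<Sum>s'\<in>UNIV. Qg A P g $ s $ s') = (\<Sum>a\<in>A s. g s a * (\<Sum>s'\<in>UNIV. P s s' a))"
    unfolding Qg_def by (simp add: sum_distrib_left sum.swap[of _ "A s"])
  also have "\<dots> = 0" using assms(1) unfolding mdp_def by simp
  finally show "(\<Sum>s'\<in>UNIV. Qg A P g $ s $ s') = 0" .
qed

lemma val_eq:
  assumes "mdp A P" "stationary A g" "\<alpha> > 0"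
  shows "(mat \<alpha> - Qg A P g) *v val A P R \<alpha> g = Rg A R g"
  unfolding val_def by (rule matrix_inv_solves[OF gen_invertible[OF gen_Qg[OF assms(1,2)] assms(3)]])

lemma ind_stationary:
  assumes "\<forall>s. d s \<in> A s" "\<forall>s. finite (A s)"
  shows "stationary A (ind d)"
  using assms unfolding stationary_def ind_def by (simp add: sum.delta')

lemma sum_ind:
  assumes "d s \<in> A s" "finite (A s)"
  shows "(\<Sum>a\<in>A s. ind d s a * X a) = X (d s)"
proof -
  have "(\<Sum>a\<in>A s. ind d s a * X a) = (\<Sum>a\<in>A s. if a = d s then X a else 0)"
    by (rule sum.cong) (auto simp: ind_def)
  also have "\<dots> = X (d s)" using assms by (simp add: sum.delta')
  finally show ?thesis .
qed

lemma Qg_ind: "d s \<in> A s \<Longrightarrow> finite (A s) \<Longrightarrow> Qg A P (ind d) $ s $ t = P s t (d s)"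
  unfolding Qg_def by (simp add: sum_ind)

lemma Rg_ind: "d s \<in> A s \<Longrightarrow> finite (A s) \<Longrightarrow> Rg A R (ind d) $ s = R s (d s)"
  unfolding Rg_def by (simp add: sum_ind)

lemma adv_ind:
  assumes "\<forall>s. d s \<in> A s" "\<forall>s. finite (A s)"
  shows "(Rg A R (ind d) - (mat \<alpha> - Qg A P (ind d)) *v v) $ t = adv P R \<alpha> v t (d t)"
  using assms by (simp add: mv_mat_minus Qg_ind Rg_ind adv_def)

lemma adv_zero:
  assumes "mdp A P" "\<forall>s. d s \<in> A s" "\<alpha> > 0"
  shows "adv P R \<alpha> (val A P R \<alpha> (ind d)) t (d t) = 0"
proof -
  have fin: "\<forall>s. finite (A s)" using assms(1) by (simp add: mdp_def)
  have "(mat \<alpha> - Qg A P (ind d)) *v val A P R \<alpha> (ind d) = Rg A R (ind d)"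
    by (rule val_eq[OF assms(1) ind_stationary[OF assms(2) fin] assms(3)])
  then show ?thesis using adv_ind[OF assms(2) fin, of R \<alpha> P "val A P R \<alpha> (ind d)" t] by simp
qed

lemma compare:
  assumes "mdp A P" "\<alpha> > 0" "\<forall>s. \<forall>a\<in>A s. adv P R \<alpha> v s a \<le> 0" "stationary A g"
  shows "val A P R \<alpha> g $ s \<le> v $ s"
proof -
  let ?M = "mat \<alpha> - Qg A P g"
  have gQ: "gen (Qg A P g)" by (rule gen_Qg[OF assms(1,4)])
  have key: "(?M *v (v - val A P R \<alpha> g)) $ t \<ge> 0" for t
  proof -
    have "?M *v (v - val A P R \<alpha> g) = ?M *v v - Rg A R g"
      by (simp add: matrix_vector_mult_diff_distrib val_eq[OF assms(1,4,2)])
    then have "(?M *v (v - val A P R \<alpha> g)) $ t = \<alpha> * v$t - (\<Sum>t'\<in>UNIV. Qg A P g $ t $ t' * v$t') - Rg A R g $ t"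
      by (simp add: mv_mat_minus)
    also have "\<dots> = - (\<Sum>a\<in>A t. g t a * adv P R \<alpha> v t a)"
    proof -
      have s1: "(\<Sum>a\<in>A t. g t a) = 1" using assms(4) by (simp add: stationary_def)
      have s2: "(\<Sum>t'\<in>UNIV. Qg A P g $ t $ t' * v$t') = (\<Sum>a\<in>A t. g t a * (\<Sum>t'\<in>UNIV. P t t' a * v$t'))"
        unfolding Qg_def by (simp add: sum_distrib_left sum_distrib_right sum.swap[of _ "A t"] mult.assoc)
      have s3: "(\<Sum>a\<in>A t. g t a * adv P R \<alpha> v t a) =
          (\<Sum>a\<in>A t. g t a * R t a) + (\<Sum>a\<in>A t. g t a * (\<Sum>t'\<in>UNIV. P t t' a * v$t')) - (\<Sum>a\<in>A t. g t a) * (\<alpha> * v$t)"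
      proof -
        have "(\<Sum>a\<in>A t. g t a * adv P R \<alpha> v t a) = (\<Sum>a\<in>A t. g t a * R t a + g t a * (\<Sum>t'\<in>UNIV. P t t' a * v$t') - g t a * (\<alpha> * v$t))"
          by (rule sum.cong) (simp_all add: adv_def algebra_simps)
        also have "\<dots> = (\<Sum>a\<in>A t. g t a * R t a) + (\<Sum>a\<in>A t. g t a * (\<Sum>t'\<in>UNIV. P t t' a * v$t')) - (\<Sum>a\<in>A t. g t a * (\<alpha> * v$t))"
          by (simp add: sum.distrib sum_subtractf)
        also have "(\<Sum>a\<in>A t. g t a * (\<alpha> * v$t)) = (\<Sum>a\<in>A t. g t a) * (\<alpha> * v$t)"
          by (rule sum_distrib_right[symmetric])
        finally show ?thesis .
      qed
      show ?thesis using s1 s2 s3 by (simp add: Rg_def)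
    qed
    also have "\<dots> \<ge> 0"
    proof -
      have "(\<Sum>a\<in>A t. g t a * adv P R \<alpha> v t a) \<le> 0"
        using assms(3,4) unfolding stationary_def
        by (intro sum_nonpos) (simp add: mult_nonneg_nonpos)
      then show ?thesis by simp
    qed
    finally show ?thesis .
  qed
  have "(v - val A P R \<alpha> g) $ s \<ge> 0" by (rule maxprinc[OF gQ assms(2)]) (simp add: key)
  then show ?thesis by simp
qed

lemma deviate:
  assumes "mdp A P" "\<forall>s. d s \<in> A s" "\<alpha> > 0" "a \<in> A s0"
    and pos: "adv P R \<alpha> (val A P R \<alpha> (ind d)) s0 a > 0"
  shows "(\<forall>t. val A P R \<alpha> (ind (d(s0:=a))) $ t \<ge> val A P R \<alpha> (ind d) $ t) \<and>
         val A P R \<alpha> (ind (d(s0:=a))) $ s0 > val A P R \<alpha> (ind d) $ s0"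
proof -
  have fin: "\<forall>s. finite (A s)" using assms(1) by (simp add: mdp_def)
  let ?d' = "d(s0:=a)"
  have d': "\<forall>s. ?d' s \<in> A s" using assms(2,4) by simp
  let ?v = "val A P R \<alpha> (ind d)"
  let ?M = "mat \<alpha> - Qg A P (ind ?d')"
  have gQ: "gen (Qg A P (ind ?d'))" by (rule gen_Qg[OF assms(1) ind_stationary[OF d' fin]])
  have eq: "(?M *v (val A P R \<alpha> (ind ?d') - ?v)) $ t = adv P R \<alpha> ?v t (?d' t)" for t
  proof -
    have "?M *v (val A P R \<alpha> (ind ?d') - ?v) = Rg A R (ind ?d') - ?M *v ?v"
      unfolding matrix_vector_mult_diff_distrib val_eq[OF assms(1) ind_stationary[OF d' fin] assms(3)] ..
    then have "(?M *v (val A P R \<alpha> (ind ?d') - ?v)) $ t = (Rg A R (ind ?d') - ?M *v ?v) $ t"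
      by (rule arg_cong)
    also have "\<dots> = adv P R \<alpha> ?v t (?d' t)" by (rule adv_ind[OF d' fin])
    finally show ?thesis .
  qed
  have nn: "(?M *v (val A P R \<alpha> (ind ?d') - ?v)) $ t \<ge> 0" for t
  proof (cases "t = s0")
    case True then show ?thesis using eq pos by simp
  next
    case False then show ?thesis using eq adv_zero[OF assms(1,2,3), of R t] by simp
  qed
  have "(?M *v (val A P R \<alpha> (ind ?d') - ?v)) $ s0 > 0" using eq pos by simp
  then have "(val A P R \<alpha> (ind ?d') - ?v) $ s0 > 0" using strict_pos[OF gQ assms(3)] nn by blast
  moreover have "(val A P R \<alpha> (ind ?d') - ?v) $ t \<ge> 0" for t using maxprinc[OF gQ assms(3)] nn by blast
  ultimately show ?thesis by simp
qed



lemma opt_exists: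
  fixes A :: "'s::finite \<Rightarrow> 'a set"
  assumes "mdp A P" "\<alpha> > 0"
  shows "\<exists>d. (\<forall>s. d s \<in> A s) \<and> (\<forall>s. \<forall>a\<in>A s. adv P R \<alpha> (val A P R \<alpha> (ind d)) s a \<le> 0)"
proof -
  define DP where "DP = Pi UNIV A"
  have memDP: "d \<in> DP \<longleftrightarrow> (\<forall>s. d s \<in> A s)" for d by (simp add: DP_def Pi_iff)
  have fin: "finite DP" unfolding DP_def PiE_UNIV_domain[symmetric]
    using assms(1) by (intro finite_PiE) (auto simp: mdp_def)
  have ne: "(\<lambda>s. SOME a. a \<in> A s) \<in> DP" unfolding memDP
    using assms(1) by (simp add: mdp_def some_in_eq)
  define F where "F d = (\<Sum>s\<in>UNIV. val A P R \<alpha> (ind d) $ s)" for d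
  have "Max (F ` DP) \<in> F ` DP" using fin ne by (intro Max_in) auto
  then obtain d where d: "d \<in> DP" "F d = Max (F ` DP)" by auto
  have dmax: "F d' \<le> F d" if "d' \<in> DP" for d' using d fin that by simp
  show ?thesis
  proof (intro exI conjI)
    show "\<forall>s. d s \<in> A s" using d memDP by blast
    show "\<forall>s. \<forall>a\<in>A s. adv P R \<alpha> (val A P R \<alpha> (ind d)) s a \<le> 0"
    proof (intro allI ballI)
    fix s a assume a: "a \<in> A s"
    show "adv P R \<alpha> (val A P R \<alpha> (ind d)) s a \<le> 0"
    proof (rule ccontr)
      assume "\<not> ?thesis"
      then have pos: "adv P R \<alpha> (val A P R \<alpha> (ind d)) s a > 0" by simp
      have ds: "\<forall>s. d s \<in> A s" using d memDP by blast
      note dev = deviate[OF assms(1) ds assms(2) a pos]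
      have "F d < F (d(s:=a))" unfolding F_def
        by (rule sum_strict_mono_ex1) (use dev in auto)
      moreover have "d(s:=a) \<in> DP" using ds a memDP by simp
      ultimately show False using dmax[of "d(s:=a)"] by linarith
    qed
  qed
  qed
qed

lemma val_rational:
  fixes A :: "'s::finite \<Rightarrow> 'a set"
  assumes "mdp A P" "\<forall>s. d s \<in> A s"
  shows "\<exists>N D. \<forall>\<alpha>>0. poly D \<alpha> \<noteq> 0 \<and> val A P R \<alpha> (ind d) $ k = poly N \<alpha> / poly D \<alpha>"
proof -
  have fin: "\<forall>s. finite (A s)" using assms(1) by (simp add: mdp_def)
  obtain N D where ND: "\<forall>\<alpha>. poly D \<alpha> = det (mat \<alpha> - Qg A P (ind d)) \<and>
     (det (mat \<alpha> - Qg A P (ind d)) \<noteq> 0 \<longrightarrow> (matrix_inv (mat \<alpha> - Qg A P (ind d)) *v Rg A R (ind d))$k = poly N \<alpha> / poly D \<alpha>)"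
    using rational_inv by blast
  have "det (mat \<alpha> - Qg A P (ind d)) \<noteq> 0" if "\<alpha> > 0" for \<alpha>
    using gen_invertible[OF gen_Qg[OF assms(1) ind_stationary[OF assms(2) fin]] that]
    by (simp add: invertible_det_nz)
  show ?thesis
  proof (intro exI allI impI conjI)
    fix \<alpha> :: real assume ap: "\<alpha> > 0"
    have nz: "det (mat \<alpha> - Qg A P (ind d)) \<noteq> 0" using \<open>\<And>\<alpha>. \<alpha> > 0 \<Longrightarrow> _\<close> ap .
    show "poly D \<alpha> \<noteq> 0" using ND[rule_format, of \<alpha>] nz by simp
    show "val A P R \<alpha> (ind d) $ k = poly N \<alpha> / poly D \<alpha>" using ND[rule_format, of \<alpha>] nz by (simp add: val_def)
  qed
qed

lemma blackwell_mdp: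
  fixes A :: "'s::finite \<Rightarrow> 'a set"
  assumes "mdp A P"
  shows "\<exists>d \<alpha>0. (\<forall>s. d s \<in> A s) \<and> \<alpha>0 > 0 \<and> (\<forall>\<alpha>. 0 < \<alpha> \<and> \<alpha> \<le> \<alpha>0 \<longrightarrow>
           (\<forall>g. stationary A g \<longrightarrow> (\<forall>s. val A P R \<alpha> g $ s \<le> val A P R \<alpha> (ind d) $ s)))"
proof -
  have finA: "\<forall>s. finite (A s)" using assms(1) by (simp add: mdp_def)
  define DP where "DP = Pi UNIV A"
  have memDP: "d \<in> DP \<longleftrightarrow> (\<forall>s. d s \<in> A s)" for d by (simp add: DP_def Pi_iff)
  have fin: "finite DP" unfolding DP_def PiE_UNIV_domain[symmetric]
    using assms(1) by (intro finite_PiE) (auto simp: mdp_def)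
  define H where "H d d' s \<alpha> = val A P R \<alpha> (ind d) $ s - val A P R \<alpha> (ind d') $ s" for d d' s \<alpha>
  define Pr where "Pr t \<epsilon> = (\<forall>\<alpha> \<beta>. 0 < \<alpha> \<longrightarrow> \<alpha> < \<epsilon> \<longrightarrow> 0 < \<beta> \<longrightarrow> \<beta> < (\<epsilon>::real) \<longrightarrow>
      (H (fst t) (fst (snd t)) (snd (snd t)) \<alpha> \<ge> 0 \<longleftrightarrow> H (fst t) (fst (snd t)) (snd (snd t)) \<beta> \<ge> 0))" for t \<epsilon>
  have ev: "\<forall>t\<in>DP \<times> DP \<times> (UNIV::'s set). eventually (Pr t) (at_right 0)"
  proof
    fix t assume t: "t \<in> DP \<times> DP \<times> (UNIV::'s set)"
    obtain d d' s where t0: "t = (d, d', s)" by (cases t) blast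
    then have "d \<in> DP" "d' \<in> DP" using t by auto
    then have tt: "t = (d, d', s)" "\<forall>s. d s \<in> A s" "\<forall>s. d' s \<in> A s"
      using t0 memDP by blast+
    obtain N D where ND: "\<forall>\<alpha>>0. poly D \<alpha> \<noteq> 0 \<and> val A P R \<alpha> (ind d) $ s = poly N \<alpha> / poly D \<alpha>"
      using val_rational[OF assms tt(2)] by blast
    obtain N' D' where ND': "\<forall>\<alpha>>0. poly D' \<alpha> \<noteq> 0 \<and> val A P R \<alpha> (ind d') $ s = poly N' \<alpha> / poly D' \<alpha>"
      using val_rational[OF assms tt(3)] by blast
    have pD: "\<forall>\<alpha>>0. poly D \<alpha> \<noteq> 0 \<and> poly D' \<alpha> \<noteq> 0" using ND ND' by simp
    obtain \<epsilon> where e: "\<epsilon> > 0" "\<forall>\<alpha> \<beta>. 0 < \<alpha> \<longrightarrow> \<alpha> < \<epsilon> \<longrightarrow> 0 < \<beta> \<longrightarrow> \<beta> < \<epsilon> \<longrightarrow>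
        (poly N \<alpha> / poly D \<alpha> - poly N' \<alpha> / poly D' \<alpha> \<ge> 0 \<longleftrightarrow> poly N \<beta> / poly D \<beta> - poly N' \<beta> / poly D' \<beta> \<ge> 0)"
      using sign_const[OF pD, of N N'] by blast
    have Heq: "H d d' s \<alpha> = poly N \<alpha> / poly D \<alpha> - poly N' \<alpha> / poly D' \<alpha>" if "\<alpha> > 0" for \<alpha>
      using ND[rule_format, OF that] ND'[rule_format, OF that] by (simp add: H_def)
    have "Pr t y" if "0 < y" "y < \<epsilon>" for y
      unfolding Pr_def tt(1) fst_conv snd_conv
    proof (intro allI impI)
      fix \<alpha> \<beta> :: real assume h: "0 < \<alpha>" "\<alpha> < y" "0 < \<beta>" "\<beta> < y"
      then have "\<alpha> < \<epsilon>" "\<beta> < \<epsilon>" using that by auto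
      then show "(H d d' s \<alpha> \<ge> 0) = (H d d' s \<beta> \<ge> 0)"
        unfolding Heq[OF h(1)] Heq[OF h(3)] by (rule e(2)[rule_format, OF h(1) _ h(3)])
    qed
    then show "eventually (Pr t) (at_right 0)"
      unfolding eventually_at_right_field using e(1) by blast
  qed
  have "eventually (\<lambda>\<epsilon>. \<forall>t\<in>DP \<times> DP \<times> (UNIV::'s set). Pr t \<epsilon>) (at_right 0)"
    by (rule eventually_ball_finite[OF _ ev]) (simp add: fin)
  then have "\<exists>b>0. \<forall>y>0. y < b \<longrightarrow> (\<forall>t\<in>DP \<times> DP \<times> (UNIV::'s set). Pr t y)"
    by (simp only: eventually_at_right_field)
  then obtain b :: real where b: "b > 0" "\<forall>y>0. y < b \<longrightarrow> (\<forall>t\<in>DP \<times> DP \<times> (UNIV::'s set). Pr t y)"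
    by blast
  define \<epsilon> where "\<epsilon> = b / 2"
  have epos: "\<epsilon> > 0" using b(1) by (simp add: \<epsilon>_def)
  have "\<epsilon> < b" using b(1) by (simp add: \<epsilon>_def)
  then have ePr: "\<forall>t\<in>DP \<times> DP \<times> (UNIV::'s set). Pr t \<epsilon>" using b(2) epos by simp
  define \<beta> where "\<beta> = \<epsilon> / 2"
  have bpos: "\<beta> > 0" "\<beta> < \<epsilon>" using epos by (simp_all add: \<beta>_def)
  obtain d where d: "\<forall>s. d s \<in> A s" "\<forall>s. \<forall>a\<in>A s. adv P R \<beta> (val A P R \<beta> (ind d)) s a \<le> 0"
    using opt_exists[OF assms bpos(1)] by blast
  have dDP: "d \<in> DP" using d(1) memDP by simp
  show ?thesis
  proof (intro exI conjI)
    show "\<forall>s. d s \<in> A s" by (rule d(1))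
    show "\<beta> > 0" by (rule bpos(1))
    show "\<forall>\<alpha>. 0 < \<alpha> \<and> \<alpha> \<le> \<beta> \<longrightarrow>
           (\<forall>g. stationary A g \<longrightarrow> (\<forall>s. val A P R \<alpha> g $ s \<le> val A P R \<alpha> (ind d) $ s))"
    proof (intro allI impI)
    fix \<alpha> g s assume a: "0 < \<alpha> \<and> \<alpha> \<le> \<beta>" and g: "stationary A g"
    have Hn: "H d d' s' \<alpha> \<ge> 0" if "d' \<in> DP" for d' s'
    proof -
      have "val A P R \<beta> (ind d') $ s' \<le> val A P R \<beta> (ind d) $ s'"
        using compare[OF assms bpos(1) d(2) ind_stationary[OF _ finA], of d' s'] that memDP by simp
      then have "H d d' s' \<beta> \<ge> 0" by (simp add: H_def)
      moreover have "Pr (d, d', s') \<epsilon>" using dDP that by (intro ePr[rule_format]) simp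
      moreover have hh: "0 < \<alpha>" "\<alpha> < \<epsilon>" "0 < \<beta>" "\<beta> < \<epsilon>" using a bpos by auto
      ultimately show "H d d' s' \<alpha> \<ge> 0" 
        unfolding Pr_def fst_conv snd_conv using hh by blast
    qed
    have domin: "val A P R \<alpha> (ind d') $ s' \<le> val A P R \<alpha> (ind d) $ s'" if "d' \<in> DP" for d' s'
    proof -
      have "H d d' s' \<alpha> \<ge> 0" using Hn[OF that] .
      then show ?thesis by (simp add: H_def)
    qed
    have "\<forall>s. \<forall>a\<in>A s. adv P R \<alpha> (val A P R \<alpha> (ind d)) s a \<le> 0"
    proof (intro allI ballI)
      fix s a assume aa: "a \<in> A s"
      show "adv P R \<alpha> (val A P R \<alpha> (ind d)) s a \<le> 0"
      proof (rule ccontr)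
        assume "\<not> ?thesis"
        then have pos: "adv P R \<alpha> (val A P R \<alpha> (ind d)) s a > 0" by simp
        have "val A P R \<alpha> (ind (d(s:=a))) $ s > val A P R \<alpha> (ind d) $ s"
          using deviate[OF assms d(1) _ aa pos] a by simp
        moreover have "d(s:=a) \<in> DP" using d(1) aa memDP by simp
        ultimately show False using domin[of "d(s:=a)" s] by linarith
      qed
    qed
    then show "val A P R \<alpha> g $ s \<le> val A P R \<alpha> (ind d) $ s"
      using compare[OF assms _ _ g] a by simp
  qed
  qed
qed



lemma ex_argmax:
  fixes h :: "'a \<Rightarrow> real"
  assumes "finite S" "S \<noteq> {}"
  shows "\<exists>b\<in>S. \<forall>a\<in>S. h a \<le> h b"
proof -
  have "Max (h ` S) \<in> h ` S" using assms by (intro Max_in) auto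
  then obtain b where b: "b \<in> S" "h b = Max (h ` S)" by auto
  then show ?thesis using assms by (intro bexI[of _ b]) auto
qed

lemma deterministic_ind:
  assumes "\<forall>s. d s \<in> A s" "\<forall>s. finite (A s)"
  shows "deterministic A (ind d)"
  unfolding deterministic_def
proof (intro conjI allI)
  show "stationary A (ind d)" by (rule ind_stationary[OF assms])
  fix s show "\<exists>b\<in>A s. \<forall>a\<in>A s. ind d s a = (if a = b then 1 else 0)"
    using assms(1) by (intro bexI[of _ "d s"]) (auto simp: ind_def)
qed

lemma gen_mat_ind:
  assumes "\<forall>s. b s \<in> A1 s" "\<forall>s. finite (A1 s)"
  shows "gen_mat A1 A2 mu (ind b) g = Qg A2 (\<lambda>s s' a. mu s' s (b s) a) g"
proof -
  have "(\<Sum>a1\<in>A1 s. \<Sum>a2\<in>A2 s. ind b s a1 * g s a2 * mu s' s a1 a2) = (\<Sum>a2\<in>A2 s. g s a2 * mu s' s (b s) a2)" for s s'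
  proof -
    have "(\<Sum>a1\<in>A1 s. \<Sum>a2\<in>A2 s. ind b s a1 * g s a2 * mu s' s a1 a2) = (\<Sum>a1\<in>A1 s. ind b s a1 * (\<Sum>a2\<in>A2 s. g s a2 * mu s' s a1 a2))"
      by (simp add: sum_distrib_left mult.assoc)
    also have "\<dots> = (\<Sum>a2\<in>A2 s. g s a2 * mu s' s (b s) a2)"
      using assms sum_ind[of b s A1 "\<lambda>a1. \<Sum>a2\<in>A2 s. g s a2 * mu s' s a1 a2"] by simp
    finally show ?thesis .
  qed
  then show ?thesis unfolding gen_mat_def Qg_def by simp
qed

lemma rew_vec_ind:
  assumes "\<forall>s. b s \<in> A1 s" "\<forall>s. finite (A1 s)"
  shows "rew_vec A1 A2 r (ind b) g = Rg A2 (\<lambda>s a. r s (b s) a) g"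
proof -
  have "(\<Sum>a1\<in>A1 s. \<Sum>a2\<in>A2 s. ind b s a1 * g s a2 * r s a1 a2) = (\<Sum>a2\<in>A2 s. g s a2 * r s (b s) a2)" for s
  proof -
    have "(\<Sum>a1\<in>A1 s. \<Sum>a2\<in>A2 s. ind b s a1 * g s a2 * r s a1 a2) = (\<Sum>a1\<in>A1 s. ind b s a1 * (\<Sum>a2\<in>A2 s. g s a2 * r s a1 a2))"
      by (simp add: sum_distrib_left mult.assoc)
    also have "\<dots> = (\<Sum>a2\<in>A2 s. g s a2 * r s (b s) a2)"
      using assms sum_ind[of b s A1 "\<lambda>a1. \<Sum>a2\<in>A2 s. g s a2 * r s a1 a2"] by simp
    finally show ?thesis .
  qed
  then show ?thesis unfolding rew_vec_def Rg_def by simp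
qed

lemma gen_mat_sc:
  assumes "stationary A1 f" "\<forall>s s' a1 a2. a1 \<in> A1 s \<longrightarrow> a2 \<in> A2 s \<longrightarrow> mu s' s a1 a2 = mu2 s' s a2"
  shows "gen_mat A1 A2 mu f g = (\<chi> s s'. \<Sum>a2\<in>A2 s. g s a2 * mu2 s' s a2)"
proof -
  have "(\<Sum>a1\<in>A1 s. \<Sum>a2\<in>A2 s. f s a1 * g s a2 * mu s' s a1 a2) = (\<Sum>a2\<in>A2 s. g s a2 * mu2 s' s a2)" for s s'
  proof -
    have "(\<Sum>a1\<in>A1 s. \<Sum>a2\<in>A2 s. f s a1 * g s a2 * mu s' s a1 a2) = (\<Sum>a1\<in>A1 s. f s a1 * (\<Sum>a2\<in>A2 s. g s a2 * mu2 s' s a2))"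
      using assms(2) by (intro sum.cong refl) (simp add: sum_distrib_left mult.assoc)
    also have "\<dots> = (\<Sum>a1\<in>A1 s. f s a1) * (\<Sum>a2\<in>A2 s. g s a2 * mu2 s' s a2)"
      by (simp add: sum_distrib_right)
    also have "\<dots> = (\<Sum>a2\<in>A2 s. g s a2 * mu2 s' s a2)" using assms(1) by (simp add: stationary_def)
    finally show ?thesis .
  qed
  then show ?thesis unfolding gen_mat_def by simp
qed

lemma rew_vec_ar:
  assumes "stationary A1 f" "stationary A2 g"
    "\<forall>s a1 a2. a1 \<in> A1 s \<longrightarrow> a2 \<in> A2 s \<longrightarrow> r1 s a1 a2 = r11 s a1 + r12 s a2"
  shows "rew_vec A1 A2 r1 f g $ s = (\<Sum>a1\<in>A1 s. f s a1 * r11 s a1) + (\<Sum>a2\<in>A2 s. g s a2 * r12 s a2)"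
proof -
  have "rew_vec A1 A2 r1 f g $ s = (\<Sum>a1\<in>A1 s. \<Sum>a2\<in>A2 s. f s a1 * r11 s a1 * g s a2 + f s a1 * (g s a2 * r12 s a2))"
    unfolding rew_vec_def using assms(3) by (simp add: algebra_simps cong: sum.cong)
  also have "\<dots> = (\<Sum>a1\<in>A1 s. f s a1 * r11 s a1 * (\<Sum>a2\<in>A2 s. g s a2) + f s a1 * (\<Sum>a2\<in>A2 s. g s a2 * r12 s a2))"
    by (simp add: sum.distrib sum_distrib_left)
  also have "\<dots> = (\<Sum>a1\<in>A1 s. f s a1 * r11 s a1) + (\<Sum>a1\<in>A1 s. f s a1) * (\<Sum>a2\<in>A2 s. g s a2 * r12 s a2)"
    using assms(2) by (simp add: stationary_def sum.distrib sum_distrib_right)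
  also have "\<dots> = (\<Sum>a1\<in>A1 s. f s a1 * r11 s a1) + (\<Sum>a2\<in>A2 s. g s a2 * r12 s a2)"
    using assms(1) by (simp add: stationary_def)
  finally show ?thesis .
qed



theorem theorem4:
  fixes A1 :: "'s::finite \<Rightarrow> 'a1 set" and A2 :: "'s \<Rightarrow> 'a2 set"
    and r1 r2 :: "'s \<Rightarrow> 'a1 \<Rightarrow> 'a2 \<Rightarrow> real"
    and mu :: "'s \<Rightarrow> 's \<Rightarrow> 'a1 \<Rightarrow> 'a2 \<Rightarrow> real"
  assumes "valid_game A1 A2 mu"
    and "SC_AR A1 A2 r1 mu"
  shows "\<exists>f g \<alpha>0. deterministic A1 f \<and> deterministic A2 g \<and> \<alpha>0 > 0 \<and>
           (\<forall>\<alpha>. 0 < \<alpha> \<and> \<alpha> \<le> \<alpha>0 \<longrightarrow> disc_nash A1 A2 mu r1 r2 \<alpha> f g)"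
proof -
  obtain mu2 :: "'s \<Rightarrow> 's \<Rightarrow> 'a2 \<Rightarrow> real" where mu2:
    "\<forall>s s' a1 a2. a1 \<in> A1 s \<longrightarrow> a2 \<in> A2 s \<longrightarrow> mu s' s a1 a2 = mu2 s' s a2"
    using assms(2) unfolding SC_AR_def by blast
  obtain r11 :: "'s \<Rightarrow> 'a1 \<Rightarrow> real" and r12 :: "'s \<Rightarrow> 'a2 \<Rightarrow> real" where r1:
    "\<forall>s a1 a2. a1 \<in> A1 s \<longrightarrow> a2 \<in> A2 s \<longrightarrow> r1 s a1 a2 = r11 s a1 + r12 s a2"
    using assms(2) unfolding SC_AR_def by blast
  have vg: "\<forall>s. finite (A1 s) \<and> A1 s \<noteq> {} \<and> finite (A2 s) \<and> A2 s \<noteq> {}"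
    "\<forall>s s' a1 a2. a1 \<in> A1 s \<longrightarrow> a2 \<in> A2 s \<longrightarrow> s' \<noteq> s \<longrightarrow> mu s' s a1 a2 \<ge> 0"
    "\<forall>s a1 a2. a1 \<in> A1 s \<longrightarrow> a2 \<in> A2 s \<longrightarrow> mu s s a1 a2 = - (\<Sum>s'\<in>UNIV - {s}. mu s' s a1 a2)"
    using assms(1) unfolding valid_game_def by simp_all
  have fin1: "\<forall>s. finite (A1 s)" and fin2: "\<forall>s. finite (A2 s)" using vg(1) by blast+
  have "\<forall>s. \<exists>b. b \<in> A1 s \<and> (\<forall>a\<in>A1 s. r11 s a \<le> r11 s b)"
  proof
    fix s show "\<exists>b. b \<in> A1 s \<and> (\<forall>a\<in>A1 s. r11 s a \<le> r11 s b)"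
      using ex_argmax[of "A1 s" "r11 s"] vg(1) by auto
  qed
  from choice[OF this] obtain b1 where b1': "\<forall>s. b1 s \<in> A1 s \<and> (\<forall>a\<in>A1 s. r11 s a \<le> r11 s (b1 s))"
    by blast
  have b1: "\<forall>s. b1 s \<in> A1 s" "\<forall>s. \<forall>a\<in>A1 s. r11 s a \<le> r11 s (b1 s)" using b1' by simp_all
  define P where "P = (\<lambda>s s' a. mu s' s (b1 s) a)"
  define R where "R = (\<lambda>s a. r2 s (b1 s) a)"
  have mdpP: "mdp A2 P"
    unfolding mdp_def
  proof (intro conjI allI impI)
    fix s show "finite (A2 s)" "A2 s \<noteq> {}" using vg(1) by auto
  next
    fix s s' a assume "a \<in> A2 s" "s' \<noteq> s"
    then show "P s s' a \<ge> 0" unfolding P_def using vg(2) b1(1) by simp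
  next
    fix s a assume a: "a \<in> A2 s"
    have "(\<Sum>s'\<in>UNIV. P s s' a) = P s s a + (\<Sum>s'\<in>UNIV - {s}. P s s' a)"
      by (rule sum.remove) auto
    also have "\<dots> = 0" unfolding P_def using vg(3) b1(1) a by simp
    finally show "(\<Sum>s'\<in>UNIV. P s s' a) = 0" .
  qed
  obtain d2 \<alpha>0 where d2: "\<forall>s. d2 s \<in> A2 s" "\<alpha>0 > 0"
    "\<forall>\<alpha>. 0 < \<alpha> \<and> \<alpha> \<le> \<alpha>0 \<longrightarrow> (\<forall>g. stationary A2 g \<longrightarrow> (\<forall>s. val A2 P R \<alpha> g $ s \<le> val A2 P R \<alpha> (ind d2) $ s))"
    using blackwell_mdp[OF mdpP, of R] by blast
  define f where "f = ind b1"
  define g where "g = ind d2"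
  have statf: "stationary A1 f" unfolding f_def by (rule ind_stationary[OF b1(1) fin1])
  have statg: "stationary A2 g" unfolding g_def by (rule ind_stationary[OF d2(1) fin2])
  have pay2: "disc_payoff A1 A2 mu r2 \<alpha> f g' = val A2 P R \<alpha> g'" for \<alpha> g'
    unfolding disc_payoff_def val_def f_def P_def R_def
    by (simp add: gen_mat_ind[OF b1(1) fin1] rew_vec_ind[OF b1(1) fin1])
  show ?thesis
  proof (intro exI conjI allI impI)
    show "deterministic A1 f" unfolding f_def by (rule deterministic_ind[OF b1(1) fin1])
    show "deterministic A2 g" unfolding g_def by (rule deterministic_ind[OF d2(1) fin2])
    show "\<alpha>0 > 0" by (rule d2(2))
    fix \<alpha> assume a: "0 < \<alpha> \<and> \<alpha> \<le> \<alpha>0"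
    show "disc_nash A1 A2 mu r1 r2 \<alpha> f g"
      unfolding disc_nash_def
    proof (intro conjI allI impI)
      show "stationary A1 f" by (rule statf)
      show "stationary A2 g" by (rule statg)
    next
      fix g' s assume g': "stationary A2 g'"
      show "disc_payoff A1 A2 mu r2 \<alpha> f g $ s \<ge> disc_payoff A1 A2 mu r2 \<alpha> f g' $ s"
        unfolding pay2 g_def using d2(3)[rule_format, OF a g'] by simp
    next
      fix f' s assume f': "stationary A1 f'"
      define Q where "Q = gen_mat A1 A2 mu f g"
      have Qf': "gen_mat A1 A2 mu f' g = Q" unfolding Q_def
        using gen_mat_sc[OF f' mu2] gen_mat_sc[OF statf mu2] by simp
      have genQ: "gen Q" unfolding Q_def f_def
        using gen_Qg[OF mdpP statg] gen_mat_ind[OF b1(1) fin1, of A2 mu g] unfolding P_def by simp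
      have inv: "invertible (mat \<alpha> - Q)" using gen_invertible[OF genQ] a by simp
      let ?v = "disc_payoff A1 A2 mu r1 \<alpha> f g"
      let ?v' = "disc_payoff A1 A2 mu r1 \<alpha> f' g"
      have Mv: "(mat \<alpha> - Q) *v (?v - ?v') = rew_vec A1 A2 r1 f g - rew_vec A1 A2 r1 f' g"
        unfolding disc_payoff_def Qf' Q_def[symmetric] matrix_vector_mult_diff_distrib
          matrix_inv_solves[OF inv] ..
      have rpos: "(rew_vec A1 A2 r1 f g - rew_vec A1 A2 r1 f' g) $ t \<ge> 0" for t
      proof -
        have e1: "rew_vec A1 A2 r1 f g $ t = r11 t (b1 t) + (\<Sum>a2\<in>A2 t. g t a2 * r12 t a2)"
          using rew_vec_ar[OF statf statg r1, of t] sum_ind[of b1 t A1 "r11 t"] b1(1) fin1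
          unfolding f_def by simp
        have e2: "rew_vec A1 A2 r1 f' g $ t = (\<Sum>a1\<in>A1 t. f' t a1 * r11 t a1) + (\<Sum>a2\<in>A2 t. g t a2 * r12 t a2)"
          using rew_vec_ar[OF f' statg r1, of t] .
        have "(\<Sum>a1\<in>A1 t. f' t a1 * r11 t a1) \<le> (\<Sum>a1\<in>A1 t. f' t a1 * r11 t (b1 t))"
          using f' b1(2) unfolding stationary_def by (intro sum_mono mult_left_mono) auto
        also have "\<dots> = (\<Sum>a1\<in>A1 t. f' t a1) * r11 t (b1 t)" by (simp add: sum_distrib_right)
        also have "\<dots> = r11 t (b1 t)" using f' by (simp add: stationary_def)
        finally show ?thesis using e1 e2 by simp
      qed
      have "\<forall>t. ((mat \<alpha> - Q) *v (?v - ?v')) $ t \<ge> 0" unfolding Mv using rpos by blast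
      then have "(?v - ?v') $ s \<ge> 0"
        using maxprinc[OF genQ, of \<alpha> "?v - ?v'" s] a by simp
      then show "?v $ s \<ge> ?v' $ s" by simp
    qed
  qed
qed


end
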